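(* If $G$ is a (finite, loopless) multigraph and $f$ is a demand function for the line graph $L(G)$ such that each edge $e\in E(G)$ with endpoints $u,v$ satisfies $f(e) \leq 2 / (3\max\{d(u), d(v)\})$, then $L(G)$ has an $f$-coloring.
   Context: For a multigraph $G$, $\mu(uv)$ denotes the number of edges between $u$ and $v$ and $d(v)=\sum_{u\in N(v)}\mu(uv)$ is the number of edges incident to $v$. The line graph $L(G)$ has vertex set $E(G)$, two edges being adjacent when they share an endpoint. A demand function for a graph $H$ is a function $f: V(H)\to [0,1]\cap\mathbb{Q}$. A fractional coloring of $H$ assigns to each vertex a measurable subset of $[0,1]$ so that adjacent vertices receive disjoint sets; an $f$-coloring is a fractional coloring $\phi$ with Lebesgue measure of $\phi(x)$ at least $f(x)$ for every vertex $x$. *)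

theory Defs
  imports "HOL-Analysis.Analysis"
begin

text \<open>Parallel edges are distinct identifiers with the same endpoints.\<close>
definition multigraph :: "'v set \<Rightarrow> 'e set \<Rightarrow> ('e \<Rightarrow> 'v set) \<Rightarrow> bool" where
  "multigraph V E ends \<longleftrightarrow> finite V \<and> finite E \<and>
     (\<forall>e\<in>E. ends e \<subseteq> V \<and> card (ends e) = 2)"

definition mdegree :: "'e set \<Rightarrow> ('e \<Rightarrow> 'v set) \<Rightarrow> 'v \<Rightarrow> nat" where
  "mdegree E ends v = card {e\<in>E. v \<in> ends e}"

definition line_adj :: "'e set \<Rightarrow> ('e \<Rightarrow> 'v set) \<Rightarrow> 'e \<Rightarrow> 'e \<Rightarrow> bool" where
  "line_adj E ends e e' \<longleftrightarrow> e \<in> E \<and> e' \<in> E \<and> e \<noteq> e' \<and> ends e \<inter> ends e' \<noteq> {}"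

definition demand_function :: "'x set \<Rightarrow> ('x \<Rightarrow> real) \<Rightarrow> bool" where
  "demand_function X f \<longleftrightarrow> (\<forall>x\<in>X. f x \<in> \<rat> \<and> 0 \<le> f x \<and> f x \<le> 1)"

definition f_coloring :: "'x set \<Rightarrow> ('x \<Rightarrow> 'x \<Rightarrow> bool) \<Rightarrow> ('x \<Rightarrow> real) \<Rightarrow> ('x \<Rightarrow> real set) \<Rightarrow> bool" where
  "f_coloring X adj f \<phi> \<longleftrightarrow>
     (\<forall>x\<in>X. \<phi> x \<in> sets lebesgue \<and> \<phi> x \<subseteq> {0..1} \<and> f x \<le> measure lebesgue (\<phi> x)) \<and>
     (\<forall>x\<in>X. \<forall>y\<in>X. adj x y \<longrightarrow> \<phi> x \<inter> \<phi> y = {})"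

end

theory Submission
  imports Defs
begin

definition proper_col :: "nat \<Rightarrow> 'e set \<Rightarrow> ('e \<Rightarrow> 'v set) \<Rightarrow> ('e \<Rightarrow> nat) \<Rightarrow> bool" where
 "proper_col k F ends c \<longleftrightarrow> (\<forall>e\<in>F. c e < k) \<and>
    (\<forall>e\<in>F. \<forall>e'\<in>F. e \<noteq> e' \<longrightarrow> ends e \<inter> ends e' \<noteq> {} \<longrightarrow> c e \<noteq> c e')"

definition misses :: "'e set \<Rightarrow> ('e \<Rightarrow> 'v set) \<Rightarrow> ('e \<Rightarrow> nat) \<Rightarrow> 'v \<Rightarrow> nat \<Rightarrow> bool" where
 "misses F ends c v col \<longleftrightarrow> (\<forall>e\<in>F. v \<in> ends e \<longrightarrow> c e \<noteq> col)"

definition krel :: "'e set \<Rightarrow> ('e \<Rightarrow> 'v set) \<Rightarrow> ('e \<Rightarrow> nat) \<Rightarrow> nat \<Rightarrow> nat \<Rightarrow> ('v \<times> 'v) set" where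
 "krel F ends c a b = {(u,v). \<exists>e\<in>{e\<in>F. c e \<in> {a,b}}. ends e = {u,v}}"

definition kcomp :: "'e set \<Rightarrow> ('e \<Rightarrow> 'v set) \<Rightarrow> ('e \<Rightarrow> nat) \<Rightarrow> nat \<Rightarrow> nat \<Rightarrow> 'v \<Rightarrow> 'v set" where
 "kcomp F ends c a b s = (krel F ends c a b)\<^sup>* `` {s}"

definition kswap :: "'e set \<Rightarrow> ('e \<Rightarrow> 'v set) \<Rightarrow> ('e \<Rightarrow> nat) \<Rightarrow> nat \<Rightarrow> nat \<Rightarrow> 'v \<Rightarrow> 'e \<Rightarrow> nat" where
 "kswap F ends c a b s e = (if e \<in> F \<and> c e \<in> {a,b} \<and> ends e \<inter> kcomp F ends c a b s \<noteq> {}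
     then (if c e = a then b else a) else c e)"

definition wf_ends :: "'e set \<Rightarrow> ('e \<Rightarrow> 'v set) \<Rightarrow> bool" where
 "wf_ends F ends \<longleftrightarrow> (\<forall>e\<in>F. card (ends e) = 2)"

lemma card2_eq: "card A = 2 \<Longrightarrow> u \<in> A \<Longrightarrow> v \<in> A \<Longrightarrow> u \<noteq> v \<Longrightarrow> A = {u,v}"
  by (auto simp: card_2_iff)

lemma kcomp_refl: "s \<in> kcomp F ends c a b s"
  by (simp add: kcomp_def)

lemma kcomp_closed:
  assumes "wf_ends F ends" "u \<in> kcomp F ends c a b s" "e \<in> F" "c e \<in> {a,b}" "u \<in> ends e" "v \<in> ends e"
  shows "v \<in> kcomp F ends c a b s"
proof (cases "u = v")
  case False
  then have "ends e = {u,v}" using assms card2_eq unfolding wf_ends_def by metis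
  then have "(u,v) \<in> krel F ends c a b" using assms unfolding krel_def by blast
  then show ?thesis using assms(2) unfolding kcomp_def by (meson Image_singleton_iff rtrancl.rtrancl_into_rtrancl)
qed (use assms in auto)

lemma kcomp_sym:
  assumes "v \<in> kcomp F ends c a b s" shows "s \<in> kcomp F ends c a b v"
proof -
  have "sym (krel F ends c a b)" unfolding krel_def sym_def by (auto simp: insert_commute)
  then have "sym ((krel F ends c a b)\<^sup>*)" by (rule sym_rtrancl)
  then show ?thesis using assms unfolding kcomp_def sym_def by blast
qed

lemma kcomp_trans:
  assumes "v \<in> kcomp F ends c a b s" "w \<in> kcomp F ends c a b v" shows "w \<in> kcomp F ends c a b s"
  using assms unfolding kcomp_def by (meson Image_singleton_iff rtrancl_trans)

lemma kswap_out:
  assumes "wf_ends F ends" "v \<notin> kcomp F ends c a b s" "v \<in> ends e" "e \<in> F"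
  shows "kswap F ends c a b s e = c e"
proof -
  have "\<not> (c e \<in> {a,b} \<and> ends e \<inter> kcomp F ends c a b s \<noteq> {})"
    using kcomp_closed[OF assms(1) _ assms(4) _ _ assms(3)] assms(2) by blast
  then show ?thesis unfolding kswap_def by auto
qed

lemma kswap_misses_out:
  assumes "wf_ends F ends" "v \<notin> kcomp F ends c a b s"
  shows "misses F ends (kswap F ends c a b s) v col \<longleftrightarrow> misses F ends c v col"
  using kswap_out[OF assms] unfolding misses_def by auto

lemma kswap_misses_in:
  assumes "v \<in> kcomp F ends c a b s" "misses F ends c v b" "a \<noteq> b"
  shows "misses F ends (kswap F ends c a b s) v a"
  using assms unfolding misses_def kswap_def by auto

lemma kswap_proper:
  assumes "proper_col k F ends c" "wf_ends F ends" "a < k" "b < k" "a \<noteq> b"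
  shows "proper_col k F ends (kswap F ends c a b s)"
  unfolding proper_col_def
proof (intro conjI ballI impI)
  fix e assume "e \<in> F" then show "kswap F ends c a b s e < k"
    using assms unfolding proper_col_def kswap_def by auto
next
  fix e e' assume e: "e \<in> F" and e': "e' \<in> F" and ne: "e \<noteq> e'" and sh: "ends e \<inter> ends e' \<noteq> {}"
  let ?C = "kcomp F ends c a b s"
  have d: "c e \<noteq> c e'" using assms(1) e e' ne sh unfolding proper_col_def by blast
  obtain w where w: "w \<in> ends e" "w \<in> ends e'" using sh by blast
  have ch: "ends x \<inter> ?C \<noteq> {} \<longleftrightarrow> w \<in> ?C" if "x \<in> F" "c x \<in> {a,b}" "w \<in> ends x" for x
  proof
    assume "ends x \<inter> ?C \<noteq> {}"
    then obtain u where "u \<in> ends x" "u \<in> ?C" by blast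
    then show "w \<in> ?C" using kcomp_closed[of F ends u c a b s x w] assms(2) that by blast
  qed (use that in blast)
  have ke: "kswap F ends c a b s x = (if c x \<in> {a,b} \<and> w \<in> ?C then (if c x = a then b else a) else c x)"
    if "x \<in> F" "w \<in> ends x" for x
    using ch[OF that(1) _ that(2)] that(1) unfolding kswap_def by auto
  show "kswap F ends c a b s e \<noteq> kswap F ends c a b s e'"
    unfolding ke[OF e w(1)] ke[OF e' w(2)]
  proof (cases "w \<in> ?C")
    case True
    then show "(if c e \<in> {a,b} \<and> w \<in> ?C then (if c e = a then b else a) else c e) \<noteq>
      (if c e' \<in> {a,b} \<and> w \<in> ?C then (if c e' = a then b else a) else c e')"
      using d assms(5) by (cases "c e \<in> {a,b}"; cases "c e' \<in> {a,b}") auto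
  qed (use d in simp)
qed

lemma kcomp_finite:
  assumes "finite F" "wf_ends F ends"
  shows "finite (kcomp F ends c a b s)"
proof -
  have "kcomp F ends c a b s \<subseteq> insert s (\<Union>(ends ` F))"
  proof
    fix v assume "v \<in> kcomp F ends c a b s"
    then have "(s,v) \<in> (krel F ends c a b)\<^sup>*" unfolding kcomp_def by simp
    then show "v \<in> insert s (\<Union>(ends ` F))"
    proof (cases rule: rtranclE)
      case (step u)
      then show ?thesis unfolding krel_def by auto
    qed simp
  qed
  moreover have "finite (ends e)" if "e \<in> F" for e
    using assms that unfolding wf_ends_def by (metis card.infinite zero_neq_numeral)
  ultimately show ?thesis using assms(1) by (meson finite_UN_I finite_insert finite_subset)
qed

lemma conn_edges:
  fixes R :: "('v\<times>'v) set"
  assumes R: "R = {(u,v). \<exists>e\<in>K. ends e = {u,v}}"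
    and fin: "finite (R\<^sup>* `` {s})" and finK: "finite K"
  shows "card (R\<^sup>* `` {s}) \<le> Suc (card {e\<in>K. ends e \<subseteq> R\<^sup>* `` {s}})"
proof -
  define C where "C = R\<^sup>* `` {s}"
  define dist where "dist t = (LEAST n. (s,t) \<in> R ^^ n)" for t
  have dist1: "(s, t) \<in> R ^^ dist t" if "t \<in> C" for t
  proof -
    from that have "(s,t) \<in> R\<^sup>*" by (simp add: C_def)
    then obtain n where "(s,t) \<in> R^^n" using rtrancl_power by blast
    then show ?thesis unfolding dist_def by (rule LeastI)
  qed
  have dist2: "dist t \<le> n" if "(s,t) \<in> R^^n" for t n
    unfolding dist_def using that by (rule Least_le)
  have par: "\<exists>e\<in>K. \<exists>u\<in>C. ends e = {u,t} \<and> Suc (dist u) = dist t" if "t \<in> C" "t \<noteq> s" for t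
  proof -
    have st: "(s,t) \<in> R ^^ dist t" using dist1 that by blast
    have "dist t \<noteq> 0"
    proof
      assume "dist t = 0"
      with st have "(s,t) \<in> R^^0" by simp
      then show False using that(2) by simp
    qed
    then obtain n where n: "dist t = Suc n" by (cases "dist t") auto
    with st have "(s,t) \<in> R^^(Suc n)" by simp
    then obtain u where u1: "(s,u) \<in> R^^n" and u2: "(u,t) \<in> R" by (rule relpow_Suc_E)
    have uC: "u \<in> C" using u1 unfolding C_def using relpow_imp_rtrancl by blast
    have "dist u \<le> n" using dist2 u1 by blast
    moreover have "dist t \<le> Suc (dist u)"
    proof -
      have "(s,u) \<in> R^^dist u" using dist1 uC by blast
      then have "(s,t) \<in> R^^Suc (dist u)" using u2 by auto
      then show ?thesis using dist2 by blast
    qed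
    ultimately have "Suc (dist u) = dist t" using n by linarith
    moreover obtain e where "e\<in>K" "ends e = {u,t}" using u2 R by auto
    ultimately show ?thesis using uC by blast
  qed
  define p where "p t = (SOME e. e\<in>K \<and> (\<exists>u\<in>C. ends e = {u,t} \<and> Suc (dist u) = dist t))" for t
  have p: "p t \<in> K \<and> (\<exists>u\<in>C. ends (p t) = {u,t} \<and> Suc (dist u) = dist t)" if "t \<in> C" "t \<noteq> s" for t
    unfolding p_def by (rule someI_ex) (use par[OF that] in blast)
  have inj: "inj_on p (C - {s})"
  proof (rule inj_onI)
    fix t1 t2 assume t1: "t1 \<in> C - {s}" and t2: "t2 \<in> C - {s}" and eq: "p t1 = p t2"
    obtain u1 where u1: "u1\<in>C" "ends (p t1) = {u1,t1}" "Suc (dist u1) = dist t1" using p t1 by blast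
    obtain u2 where u2: "u2\<in>C" "ends (p t2) = {u2,t2}" "Suc (dist u2) = dist t2" using p t2 by blast
    show "t1 = t2"
    proof (rule ccontr)
      assume "t1 \<noteq> t2"
      then have "t1 = u2 \<and> t2 = u1" using eq u1(2) u2(2) by (auto simp: doubleton_eq_iff)
      then show False using u1(3) u2(3) by simp
    qed
  qed
  have img: "p ` (C - {s}) \<subseteq> {e\<in>K. ends e \<subseteq> C}"
  proof
    fix e assume "e \<in> p ` (C - {s})"
    then obtain t where t: "t \<in> C - {s}" "e = p t" by blast
    then show "e \<in> {e\<in>K. ends e \<subseteq> C}" using p[of t] by auto
  qed
  have "card (C - {s}) \<le> card {e\<in>K. ends e \<subseteq> C}"
    using card_inj_on_le[OF inj img] finK by simp
  moreover have "s \<in> C" unfolding C_def by simp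
  ultimately show ?thesis using fin unfolding C_def by (simp add: card_Diff_singleton)
qed


lemma has_color_union:
  fixes a b :: nat and s
  assumes "proper_col k F ends c" "wf_ends F ends"
  defines "C \<equiv> kcomp F ends c a b s"
  assumes col: "col \<in> {a,b}"
  shows "{v\<in>C. \<not> misses F ends c v col} = \<Union>(ends ` {e\<in>F. c e = col \<and> ends e \<subseteq> C})"
proof
  show "{v \<in> C. \<not> misses F ends c v col} \<subseteq> \<Union> (ends ` {e \<in> F. c e = col \<and> ends e \<subseteq> C})"
  proof
    fix v assume v: "v \<in> {v \<in> C. \<not> misses F ends c v col}"
    then obtain e where e: "e \<in> F" "v \<in> ends e" "c e = col" unfolding misses_def by blast
    have "ends e \<subseteq> C" using kcomp_closed[of F ends v c a b s e] assms(2) v e col unfolding C_def by blast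
    then show "v \<in> \<Union> (ends ` {e \<in> F. c e = col \<and> ends e \<subseteq> C})" using e by blast
  qed
qed (auto simp: misses_def)

lemma card_color_class:
  fixes a b :: nat and s
  assumes "proper_col k F ends c" "wf_ends F ends" "finite F"
  defines "C \<equiv> kcomp F ends c a b s"
  assumes col: "col \<in> {a,b}"
  shows "card {v\<in>C. \<not> misses F ends c v col} = 2 * card {e\<in>F. c e = col \<and> ends e \<subseteq> C}"
proof -
  let ?K = "{e\<in>F. c e = col \<and> ends e \<subseteq> C}"
  have "card (\<Union>(ends ` ?K)) = (\<Sum>e\<in>?K. card (ends e))"
  proof (rule card_UN_disjoint)
    show "finite ?K" using assms(3) by simp
    show "\<forall>e\<in>?K. finite (ends e)" using assms(2) unfolding wf_ends_def
      by (metis (mono_tags, lifting) card.infinite mem_Collect_eq zero_neq_numeral)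
    show "\<forall>e\<in>?K. \<forall>j\<in>?K. e \<noteq> j \<longrightarrow> ends e \<inter> ends j = {}"
      using assms(1) unfolding proper_col_def by blast
  qed
  also have "\<dots> = (\<Sum>e\<in>?K. 2)" using assms(2) unfolding wf_ends_def by simp
  finally show ?thesis using has_color_union[OF assms(1,2) col] unfolding C_def by simp
qed

lemma kempe_count:
  fixes a b :: nat and s
  assumes "proper_col k F ends c" "wf_ends F ends" "finite F" "a \<noteq> b"
  defines "C \<equiv> kcomp F ends c a b s"
  shows "card {v\<in>C. misses F ends c v a} + card {v\<in>C. misses F ends c v b} \<le> 2"
proof -
  have finC: "finite C" unfolding C_def by (rule kcomp_finite[OF assms(3,2)])
  define Ka where "Ka = {e\<in>F. c e = a \<and> ends e \<subseteq> C}"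
  define Kb where "Kb = {e\<in>F. c e = b \<and> ends e \<subseteq> C}"
  have ha: "card {v\<in>C. \<not> misses F ends c v a} = 2 * card Ka"
    unfolding Ka_def C_def by (rule card_color_class[OF assms(1,2,3)]) simp
  have hb: "card {v\<in>C. \<not> misses F ends c v b} = 2 * card Kb"
    unfolding Kb_def C_def by (rule card_color_class[OF assms(1,2,3)]) simp
  have split: "card {v\<in>C. \<not> P v} + card {v\<in>C. P v} = card C" for P
  proof -
    have "card ({v\<in>C. \<not> P v} \<union> {v\<in>C. P v}) = card {v\<in>C. \<not> P v} + card {v\<in>C. P v}"
      by (rule card_Un_disjoint) (use finC in auto)
    moreover have "{v\<in>C. \<not> P v} \<union> {v\<in>C. P v} = C" by auto
    ultimately show ?thesis by simp
  qed
  have conn: "card C \<le> Suc (card {e\<in>{e\<in>F. c e \<in> {a,b}}. ends e \<subseteq> C})"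
  proof -
    have f1: "finite ((krel F ends c a b)\<^sup>* `` {s})" using finC unfolding C_def kcomp_def .
    have f2: "finite {e\<in>F. c e \<in> {a,b}}" using assms(3) by simp
    show ?thesis using conn_edges[OF krel_def f1 f2] unfolding C_def kcomp_def .
  qed
  have "{e\<in>{e\<in>F. c e \<in> {a,b}}. ends e \<subseteq> C} = Ka \<union> Kb" unfolding Ka_def Kb_def by auto
  moreover have "card (Ka \<union> Kb) = card Ka + card Kb"
    by (rule card_Un_disjoint) (use assms(3,4) in \<open>auto simp: Ka_def Kb_def\<close>)
  ultimately have "card C \<le> Suc (card Ka + card Kb)" using conn by simp
  then show ?thesis using ha hb split[of "\<lambda>v. misses F ends c v a"] split[of "\<lambda>v. misses F ends c v b"]
    by linarith
qed

lemma case1: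
  assumes "proper_col k F ends c" "e1 \<in> F" "ends e1 = {x,z}" "y \<noteq> x" "y \<noteq> z"
    "misses F ends c y (c e1)" "g < k" "misses F ends c x g" "misses F ends c z g"
  shows "\<exists>c'. proper_col k F ends c' \<and> (\<exists>col<k. misses F ends c' x col \<and> misses F ends c' y col)"
proof (intro exI conjI)
  let ?c = "c(e1 := g)"
  have gne: "g \<noteq> c e1" using assms(2,3,8) unfolding misses_def by auto
  show "proper_col k F ends ?c"
    unfolding proper_col_def
  proof (intro conjI ballI impI)
    fix e assume "e \<in> F" then show "?c e < k" using assms(1,7) unfolding proper_col_def by auto
  next
    fix e e' assume e: "e \<in> F" and e': "e' \<in> F" and ne: "e \<noteq> e'" and sh: "ends e \<inter> ends e' \<noteq> {}"
    have old: "c e \<noteq> c e'" using assms(1) e e' ne sh unfolding proper_col_def by blast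
    show "?c e \<noteq> ?c e'"
    proof (cases "e = e1")
      case True
      then have "e' \<noteq> e1" using ne by simp
      obtain w where "w \<in> ends e1" "w \<in> ends e'" using sh True by blast
      then have "c e' \<noteq> g" using assms(3,8,9) e' unfolding misses_def by auto
      then show ?thesis using True \<open>e' \<noteq> e1\<close> by simp
    next
      case False
      show ?thesis
      proof (cases "e' = e1")
        case True
        obtain w where "w \<in> ends e1" "w \<in> ends e" using sh True by blast
        then have "c e \<noteq> g" using assms(3,8,9) e unfolding misses_def by auto
        then show ?thesis using True False by simp
      qed (use False old in simp)
    qed
  qed
  show "c e1 < k" using assms(1,2) unfolding proper_col_def by blast
  show "misses F ends ?c x (c e1)"
    using assms(1,2,3) gne unfolding misses_def proper_col_def by auto
  show "misses F ends ?c y (c e1)"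
    using assms(3,4,5,6) unfolding misses_def by auto
qed


lemma card_missing:
  assumes "finite F"
  shows "k \<le> card {col\<in>{..<k}. misses F ends c v col} + mdegree F ends v"
proof -
  have "{..<k} \<subseteq> {col\<in>{..<k}. misses F ends c v col} \<union> c ` {e\<in>F. v \<in> ends e}"
    unfolding misses_def by auto
  then have "k \<le> card ({col\<in>{..<k}. misses F ends c v col} \<union> c ` {e\<in>F. v \<in> ends e})"
  proof -
    assume h: "{..<k} \<subseteq> {col\<in>{..<k}. misses F ends c v col} \<union> c ` {e\<in>F. v \<in> ends e}"
    have "card {..<k} \<le> card ({col\<in>{..<k}. misses F ends c v col} \<union> c ` {e\<in>F. v \<in> ends e})"
      by (rule card_mono[OF _ h]) (use assms in simp)
    then show ?thesis by simp
  qed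
  also have "\<dots> \<le> card {col\<in>{..<k}. misses F ends c v col} + card (c ` {e\<in>F. v \<in> ends e})"
    by (rule card_Un_le)
  also have "\<dots> \<le> card {col\<in>{..<k}. misses F ends c v col} + mdegree F ends v"
    unfolding mdegree_def using card_image_le[of "{e\<in>F. v \<in> ends e}" c] assms by simp
  finally show ?thesis .
qed

lemma extend:
  assumes pc: "proper_col k F ends c" and wf: "wf_ends (insert e0 F) ends" and fin: "finite F"
    and e0: "e0 \<notin> F" and deg: "\<And>v. 3 * mdegree (insert e0 F) ends v \<le> 2 * k"
  shows "\<exists>c. proper_col k (insert e0 F) ends c"
proof -
  have wfF: "wf_ends F ends" using wf unfolding wf_ends_def by auto
  obtain x y where xy: "ends e0 = {x,y}" "x \<noteq> y" using wf unfolding wf_ends_def by (meson card_2_iff insertI1)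
  let ?Good = "\<exists>c'. proper_col k F ends c' \<and> (\<exists>col<k. misses F ends c' x col \<and> misses F ends c' y col)"
  have good: ?thesis if ?Good
  proof -
    obtain c' col where c': "proper_col k F ends c'" "col < k" "misses F ends c' x col" "misses F ends c' y col"
      using \<open>?Good\<close> by blast
    show ?thesis
    proof (intro exI)
      show "proper_col k (insert e0 F) ends (c'(e0 := col))"
        unfolding proper_col_def
      proof (intro conjI ballI impI)
        fix e assume "e \<in> insert e0 F" then show "(c'(e0 := col)) e < k" using c' unfolding proper_col_def by auto
      next
        fix e e' assume e: "e \<in> insert e0 F" and e': "e' \<in> insert e0 F" and ne: "e \<noteq> e'"
          and sh: "ends e \<inter> ends e' \<noteq> {}"
        show "(c'(e0 := col)) e \<noteq> (c'(e0 := col)) e'"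
        proof (cases "e = e0")
          case True
          then have "e' \<in> F" "e' \<noteq> e0" using e' ne by auto
          obtain w where "w \<in> {x,y}" "w \<in> ends e'" using sh True xy by blast
          then have "c' e' \<noteq> col" using c'(3,4) \<open>e' \<in> F\<close> unfolding misses_def by auto
          then show ?thesis using True \<open>e' \<noteq> e0\<close> by simp
        next
          case False
          then have eF: "e \<in> F" using e by auto
          show ?thesis
          proof (cases "e' = e0")
            case True
            obtain w where "w \<in> {x,y}" "w \<in> ends e" using sh True xy by blast
            then have "c' e \<noteq> col" using c'(3,4) eF unfolding misses_def by auto
            then show ?thesis using True False by simp
          next
            case False2: False
            then have "e' \<in> F" using e' by auto
            then show ?thesis using c'(1) eF ne sh False False2 unfolding proper_col_def by auto
          qed
        qed
      qed
    qed
  qed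
  show ?thesis
  proof (rule ccontr)
    assume nt: "\<not> ?thesis"
    then have ng: "\<not> ?Good" using good by blast
    define M where "M v = {col\<in>{..<k}. misses F ends c v col}" for v
    have finM: "finite (M v)" for v unfolding M_def by simp
    have cM: "k \<le> card (M v) + mdegree F ends v" for v unfolding M_def by (rule card_missing[OF fin])
    have dins: "mdegree (insert e0 F) ends v = Suc (mdegree F ends v)" if "v \<in> ends e0" for v
    proof -
      have "{e\<in>insert e0 F. v \<in> ends e} = insert e0 {e\<in>F. v \<in> ends e}" using that by auto
      then show ?thesis unfolding mdegree_def using fin e0 by simp
    qed
    have dle: "mdegree F ends v \<le> mdegree (insert e0 F) ends v" for v
      unfolding mdegree_def by (rule card_mono) (use fin in auto)
    have dx: "3 * mdegree F ends x + 3 \<le> 2 * k" using deg[of x] dins[of x] xy by simp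
    have dy: "3 * mdegree F ends y + 3 \<le> 2 * k" using deg[of y] dins[of y] xy by simp
    have disj: "M x \<inter> M y = {}"
    proof (rule ccontr)
      assume "M x \<inter> M y \<noteq> {}"
      then obtain col where "col \<in> M x" "col \<in> M y" by blast
      then have ?Good using pc unfolding M_def by blast
      then show False using ng by blast
    qed
    have "card (M y) > 0" using cM[of y] dy by linarith
    then obtain \<beta> where \<beta>: "\<beta> \<in> M y" by (metis card.empty all_not_in_conv less_irrefl)
    have "card (M x) > 0" using cM[of x] dx by linarith
    then obtain \<alpha> where \<alpha>: "\<alpha> \<in> M x" by (metis card.empty all_not_in_conv less_irrefl)
    have "\<beta> \<notin> M x" using disj \<beta> by blast
    then obtain e1 where e1: "e1 \<in> F" "x \<in> ends e1" "c e1 = \<beta>" using \<beta> unfolding M_def misses_def by auto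
    obtain z where z: "ends e1 = {x,z}" "x \<noteq> z"
    proof -
      have "card (ends e1) = 2" using wfF e1 unfolding wf_ends_def by blast
      then obtain p q where "ends e1 = {p,q}" "p \<noteq> q" by (meson card_2_iff)
      then show ?thesis using that e1(2) by (metis insert_commute insert_iff singletonD)
    qed
    have zy: "z \<noteq> y" using \<beta> e1 z unfolding M_def misses_def by auto
    have case1': False if "g \<in> M x" "misses F ends c z g" for g
    proof -
      have "?Good"
        by (rule case1[OF pc e1(1) z(1)]) (use xy zy that e1 \<beta> in \<open>auto simp: M_def\<close>)
      then show False using ng by blast
    qed
    have claim: "\<not> misses F ends c z g" if "g \<in> M x \<union> M y" for g
    proof
      assume mz: "misses F ends c z g"
      show False
      proof (cases "g \<in> M x")
        case True then show False using case1' mz by blast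
      next
        case False
        then have gy: "g \<in> M y" using that by blast
        have gb: "g \<noteq> \<beta>" using mz e1 z unfolding misses_def by auto
        have ag: "\<alpha> \<noteq> g" using disj \<alpha> gy by blast
        have ab: "\<alpha> \<noteq> \<beta>" using \<alpha> \<open>\<beta> \<notin> M x\<close> by blast
        have ak: "\<alpha> < k" "g < k" using \<alpha> gy unfolding M_def by auto
        have nza: "\<not> misses F ends c z \<alpha>" using case1' \<alpha> by blast
        let ?Cy = "kcomp F ends c \<alpha> g y"
        have yC: "y \<in> ?Cy" by (rule kcomp_refl)
        have xC: "x \<in> ?Cy"
        proof (rule ccontr)
          assume xn: "x \<notin> ?Cy"
          let ?c' = "kswap F ends c \<alpha> g y"
          have "proper_col k F ends ?c'" by (rule kswap_proper[OF pc wfF ak ag])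
          moreover have "misses F ends ?c' y \<alpha>"
            by (rule kswap_misses_in[OF yC _ ag]) (use gy in \<open>simp add: M_def\<close>)
          moreover have "misses F ends ?c' x \<alpha>"
            using kswap_misses_out[OF wfF xn] \<alpha> unfolding M_def by simp
          ultimately have ?Good using ak by blast
          then show False using ng by blast
        qed
        have zC: "z \<in> ?Cy"
        proof (rule ccontr)
          assume zn: "z \<notin> ?Cy"
          let ?Cz = "kcomp F ends c \<alpha> g z"
          let ?c' = "kswap F ends c \<alpha> g z"
          have xz: "x \<notin> ?Cz"
          proof
            assume "x \<in> ?Cz"
            then have "z \<in> kcomp F ends c \<alpha> g x" by (rule kcomp_sym)
            then have "z \<in> ?Cy" using xC kcomp_trans by metis
            then show False using zn by blast
          qed
          have yz: "y \<notin> ?Cz"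
          proof
            assume "y \<in> ?Cz"
            then have "z \<in> ?Cy" by (rule kcomp_sym)
            then show False using zn by blast
          qed
          have pc': "proper_col k F ends ?c'" by (rule kswap_proper[OF pc wfF ak ag])
          have ce1: "?c' e1 = \<beta>" using e1 gb ab unfolding kswap_def by auto
          have "?Good"
          proof (rule case1[OF pc' e1(1) z(1)])
            show "y \<noteq> x" "y \<noteq> z" using xy zy by auto
            show "misses F ends ?c' y (?c' e1)" using kswap_misses_out[OF wfF yz] \<beta> ce1 unfolding M_def by simp
            show "\<alpha> < k" by fact
            show "misses F ends ?c' x \<alpha>" using kswap_misses_out[OF wfF xz] \<alpha> unfolding M_def by simp
            show "misses F ends ?c' z \<alpha>"
              by (rule kswap_misses_in[OF kcomp_refl mz ag])
          qed
          then show False using ng by blast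
        qed
        have c3: "card {v\<in>?Cy. misses F ends c v \<alpha>} + card {v\<in>?Cy. misses F ends c v g} \<le> 2"
          by (rule kempe_count[OF pc wfF fin ag])
        have finC: "finite ?Cy" using kcomp_finite[OF fin wfF] by blast
        have fa: "finite {v\<in>?Cy. misses F ends c v \<alpha>}" using finC by simp
        have fg: "finite {v\<in>?Cy. misses F ends c v g}" using finC by simp
        have "card {x} \<le> card {v\<in>?Cy. misses F ends c v \<alpha>}"
          by (rule card_mono[OF fa]) (use xC \<alpha> in \<open>auto simp: M_def\<close>)
        moreover have "card {y,z} \<le> card {v\<in>?Cy. misses F ends c v g}"
          by (rule card_mono[OF fg]) (use yC zC gy mz in \<open>auto simp: M_def\<close>)
        moreover have "card {y,z} = 2" using zy by simp
        moreover have "card {x} = 1" by simp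
        ultimately show False using c3 by linarith
      qed
    qed
    have "M x \<union> M y \<subseteq> c ` {e\<in>F. z \<in> ends e}"
    proof
      fix g assume "g \<in> M x \<union> M y"
      then obtain e where "e \<in> F" "z \<in> ends e" "c e = g" using claim unfolding misses_def by blast
      then show "g \<in> c ` {e\<in>F. z \<in> ends e}" by blast
    qed
    then have "card (M x \<union> M y) \<le> mdegree F ends z"
      unfolding mdegree_def
    proof -
      assume h: "M x \<union> M y \<subseteq> c ` {e\<in>F. z \<in> ends e}"
      have "card (M x \<union> M y) \<le> card (c ` {e\<in>F. z \<in> ends e})" by (rule card_mono[OF _ h]) (use fin in simp)
      also have "\<dots> \<le> card {e\<in>F. z \<in> ends e}" by (rule card_image_le) (use fin in simp)
      finally show "card (M x \<union> M y) \<le> card {e\<in>F. z \<in> ends e}" .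
    qed
    moreover have "card (M x \<union> M y) = card (M x) + card (M y)" using disj finM by (simp add: card_Un_disjoint)
    ultimately show False using cM[of x] cM[of y] dx dy deg[of z] dle[of z] by linarith
  qed
qed

lemma shannon_local:
  assumes "finite F" "wf_ends F ends" "\<And>v. 3 * mdegree F ends v \<le> 2 * k"
  shows "\<exists>c. proper_col k F ends c"
  using assms
proof (induction F rule: finite_induct)
  case empty
  then show ?case unfolding proper_col_def by auto
next
  case (insert e0 F)
  have w: "wf_ends F ends" using insert.prems(1) unfolding wf_ends_def by simp
  have d: "3 * mdegree F ends v \<le> 2 * k" for v
  proof -
    have "mdegree F ends v \<le> mdegree (insert e0 F) ends v"
      unfolding mdegree_def by (rule card_mono) (use insert.hyps(1) in auto)
    then show ?thesis using insert.prems(2)[of v] by linarith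
  qed
  obtain c where "proper_col k F ends c" using insert.IH[OF w d] by blast
  then show ?case by (rule extend[OF _ insert.prems(1) insert.hyps(1) insert.hyps(2) insert.prems(2)])
qed


lemma ivl_disj:
  fixes a b N :: nat
  assumes "a \<noteq> b" "N > 0"
  shows "{real a / N ..< (real a + 1) / N} \<inter> {real b / N ..< (real b + 1) / N} = {}"
proof (rule ccontr)
  assume "\<not> ?thesis"
  then obtain t where t1: "t \<in> {real a / N ..< (real a + 1) / N}" and t2: "t \<in> {real b / N ..< (real b + 1) / N}"
    by blast
  have t: "real a / N \<le> t" "t < (real a + 1) / N" "real b / N \<le> t" "t < (real b + 1) / N"
    using t1 t2 by auto
  have N: "real N > 0" using assms by simp
  have "real a \<le> t * N" "t * N < real a + 1" "real b \<le> t * N" "t * N < real b + 1"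
    using t N by (auto simp: field_simps)
  then have "real a < real b + 1" "real b < real a + 1" by linarith+
  then have "a < b + 1" "b < a + 1" by linarith+
  then show False using assms(1) by linarith
qed

lemma common_denom:
  assumes "finite S" "\<forall>x\<in>S. g x \<in> \<rat>"
  shows "\<exists>N::nat. N > 0 \<and> (\<forall>x\<in>S. real N * g x \<in> \<int>)"
  using assms
proof (induction S rule: finite_induct)
  case empty
  then show ?case by (intro exI[of _ 1]) simp
next
  case (insert x S)
  then obtain N :: nat where N: "N > 0" "\<forall>y\<in>S. real N * g y \<in> \<int>" by auto
  have "g x \<in> \<rat>" using insert.prems by simp
  then obtain p q where pq: "q > 0" "g x = of_int p / of_int q" by (rule Rats_cases')
  define M where "M = N * nat q"
  have "M > 0" using N pq unfolding M_def by simp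
  moreover have "real M * g y \<in> \<int>" if "y \<in> insert x S" for y
  proof (cases "y = x")
    case True
    have "real M * g x = real N * of_int p" using pq unfolding M_def by (simp add: field_simps)
    then show ?thesis using True by simp
  next
    case False
    then have "y \<in> S" using that by simp
    then have "real N * g y \<in> \<int>" using N(2) by blast
    then obtain z where z: "real N * g y = of_int z" by (rule Ints_cases)
    have "real M * g y = of_int (z * q)" using z pq unfolding M_def by (simp add: algebra_simps)
    then show ?thesis by simp
  qed
  ultimately show ?case by blast
qed

theorem theorem6p2:
  fixes V :: "'v set" and E :: "'e set" and ends :: "'e \<Rightarrow> 'v set" and f :: "'e \<Rightarrow> real"
  assumes "multigraph V E ends"
    and "demand_function E f"
    and "\<And>e u v. e \<in> E \<Longrightarrow> ends e = {u, v} \<Longrightarrow>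
           f e \<le> 2 / (3 * real (max (mdegree E ends u) (mdegree E ends v)))"
  shows "\<exists>\<phi>. f_coloring E (line_adj E ends) f \<phi>"
proof -
  have finE: "finite E" and wfE: "\<And>e. e \<in> E \<Longrightarrow> card (ends e) = 2"
    using assms(1) unfolding multigraph_def by auto
  have fr: "\<forall>e\<in>E. f e \<in> \<rat>" and f0: "\<And>e. e \<in> E \<Longrightarrow> 0 \<le> f e"
    using assms(2) unfolding demand_function_def by auto
  obtain N :: nat where N: "N > 0" "\<forall>e\<in>E. real N * f e \<in> \<int>"
    using common_denom[OF finE fr] by blast
  define n where "n e = nat \<lfloor>real N * f e\<rfloor>" for e
  have rn: "real (n e) = real N * f e" if "e \<in> E" for e
  proof -
    have "real N * f e \<in> \<int>" using N(2) that by blast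
    then obtain z where z: "real N * f e = of_int z" by (rule Ints_cases)
    have "0 \<le> real N * f e" using f0[OF that] by simp
    then show ?thesis using z unfolding n_def by simp
  qed
  define H where "H = Sigma E (\<lambda>e. {..<n e})"
  define endsH where "endsH p = ends (fst p)" for p :: "'e \<times> nat"
  have finH: "finite H" unfolding H_def using finE by simp
  have wfH: "wf_ends H endsH" unfolding wf_ends_def H_def endsH_def using wfE by auto
  have degH: "3 * mdegree H endsH v \<le> 2 * N" for v
  proof -
    define Ev where "Ev = {e\<in>E. v \<in> ends e}"
    have finEv: "finite Ev" unfolding Ev_def using finE by simp
    have "{p\<in>H. v \<in> endsH p} = Sigma Ev (\<lambda>e. {..<n e})"
      unfolding H_def endsH_def Ev_def by auto
    then have "mdegree H endsH v = (\<Sum>e\<in>Ev. n e)"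
      unfolding mdegree_def using finEv by (simp add: card_SigmaI)
    then have "real (mdegree H endsH v) = (\<Sum>e\<in>Ev. real N * f e)"
      using rn unfolding Ev_def by simp
    also have "\<dots> \<le> (\<Sum>e\<in>Ev. real N * (2 / (3 * real (card Ev))))"
    proof (rule sum_mono)
      fix e assume e: "e \<in> Ev"
      then have eE: "e \<in> E" and ve: "v \<in> ends e" unfolding Ev_def by auto
      obtain u where u: "ends e = {v,u}"
      proof -
        obtain p q where "ends e = {p,q}" using wfE[OF eE] by (meson card_2_iff)
        then show ?thesis using that ve by (metis insert_commute insert_iff singletonD)
      qed
      have "f e \<le> 2 / (3 * real (max (mdegree E ends v) (mdegree E ends u)))"
        by (rule assms(3)[OF eE u])
      moreover have "card Ev > 0" using e finEv by (auto simp: card_gt_0_iff)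
      moreover have "mdegree E ends v = card Ev" unfolding mdegree_def Ev_def by simp
      ultimately have fe: "f e \<le> 2 / (3 * real (max (card Ev) (mdegree E ends u)))" and cE: "card Ev > 0"
        by simp_all
      have le: "3 * real (card Ev) \<le> 3 * real (max (card Ev) (mdegree E ends u))" by simp
      have pos: "0 < 3 * real (max (card Ev) (mdegree E ends u)) * (3 * real (card Ev))" using cE by simp
      have "2 / (3 * real (max (card Ev) (mdegree E ends u))) \<le> 2 / (3 * real (card Ev))"
        by (rule divide_left_mono[OF le _ pos]) simp
      with fe have "f e \<le> 2 / (3 * real (card Ev))" by linarith
      then show "real N * f e \<le> real N * (2 / (3 * real (card Ev)))"
        by (rule mult_left_mono) simp
    qed
    also have "\<dots> \<le> 2 * real N / 3"
    proof (cases "card Ev = 0")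
      case True then show ?thesis by simp
    next
      case False then show ?thesis by simp
    qed
    finally have "real (mdegree H endsH v) \<le> 2 * real N / 3" .
    then show ?thesis by linarith
  qed
  obtain c where c: "proper_col N H endsH c" using shannon_local[OF finH wfH degH] by blast
  define I where "I e i = {real (c (e,i)) / N ..< (real (c (e,i)) + 1) / N}" for e i
  define \<phi> where "\<phi> e = (\<Union>i\<in>{..<n e}. I e i)" for e
  have Nr: "real N > 0" using N by simp
  have cdiff: "c (e,i) \<noteq> c (e',j)" if "e \<in> E" "e' \<in> E" "i < n e" "j < n e'" "(e,i) \<noteq> (e',j)"
     "ends e \<inter> ends e' \<noteq> {}" for e e' i j
    using c that unfolding proper_col_def H_def endsH_def by auto
  have Idisj: "I e i \<inter> I e' j = {}" if "e \<in> E" "e' \<in> E" "i < n e" "j < n e'" "(e,i) \<noteq> (e',j)"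
     "ends e \<inter> ends e' \<noteq> {}" for e e' i j
    unfolding I_def using ivl_disj[OF cdiff[OF that] N(1)] .
  have ne: "ends e \<inter> ends e \<noteq> {}" if "e \<in> E" for e
    using wfE[OF that] by (metis Int_absorb card.empty zero_neq_numeral)
  show ?thesis
  proof (intro exI[of _ \<phi>])
    show "f_coloring E (line_adj E ends) f \<phi>"
      unfolding f_coloring_def
    proof (intro conjI ballI impI)
      fix e assume e: "e \<in> E"
      show "\<phi> e \<in> sets lebesgue" unfolding \<phi>_def I_def by (intro sets.finite_UN) auto
      show "\<phi> e \<subseteq> {0..1}"
      proof
        fix t assume "t \<in> \<phi> e"
        then obtain i where i: "i < n e" "t \<in> I e i" unfolding \<phi>_def by auto
        have "c (e,i) < N" using c e i unfolding proper_col_def H_def by auto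
        then have "real (c (e,i)) + 1 \<le> real N" by linarith
        moreover have "real (c (e,i)) \<le> t * N" "t * N < real (c (e,i)) + 1"
          using i(2) Nr unfolding I_def by (auto simp: field_simps)
        ultimately have h1: "0 \<le> t * N" and h2: "t * real N \<le> 1 * real N" by linarith+
        have "0 \<le> t" using h1 Nr by (simp add: zero_le_mult_iff)
        moreover have "t \<le> 1" using mult_right_le_imp_le[OF h2 Nr] .
        ultimately show "t \<in> {0..1}" by simp
      qed
      have "measure lebesgue (\<phi> e) = (\<Sum>i\<in>{..<n e}. measure lebesgue (I e i))"
        unfolding \<phi>_def
      proof (rule measure_finite_Union)
        show "disjoint_family_on (I e) {..<n e}"
          unfolding disjoint_family_on_def using Idisj[OF e e] ne[OF e] by auto
      qed (use Nr in \<open>auto simp: I_def divide_right_mono\<close>)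
      also have "\<dots> = (\<Sum>i\<in>{..<n e}. 1 / real N)"
        unfolding I_def using Nr by (simp add: field_simps)
      also have "\<dots> = real (n e) / real N" by simp
      also have "\<dots> = f e" using rn[OF e] Nr by simp
      finally show "f e \<le> measure lebesgue (\<phi> e)" by simp
    next
      fix e e' assume e: "e \<in> E" and e': "e' \<in> E" and adj: "line_adj E ends e e'"
      then have "e \<noteq> e'" "ends e \<inter> ends e' \<noteq> {}" unfolding line_adj_def by auto
      then show "\<phi> e \<inter> \<phi> e' = {}" unfolding \<phi>_def using Idisj[OF e e'] by blast
    qed
  qed
qed

end
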